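(* Let $\{x_i\}_{i\in\mathcal{I}}$ and $\{y_i\}_{i\in\mathcal{I}}$ be two sequences of vectors in $\mathbb{R}^n$, $\mathcal{J}\subset\mathcal{I}$ a finite index subset, and $\lambda>0$. Let $A=\lambda I+\sum_{j\in\mathcal{J}}x_jx_j^\top$ and $B=\lambda I+\sum_{j\in\mathcal{J}}y_jy_j^\top$, and suppose $\mathrm{rank}(\{x_i\}_{i\in\mathcal{I}})=\mathrm{rank}(\{y_i\}_{i\in\mathcal{I}})=r$. Then for all $i\in\mathcal{I}$, $$\|x_i\|_{A^{-1}}\le\frac{1}{\sqrt\lambda}\|x_i-y_i\|_2+\left(1+\frac{2\sqrt r\sqrt{\sum_{j\in\mathcal{J}}\|x_j-y_j\|_2^2}}{\sqrt\lambda}\right)\|y_i\|_{B^{-1}}.$$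
   Context: For a positive definite matrix $M$, $\|x\|_M=\sqrt{x^\top Mx}$. *)

theory Defs
  imports "HOL-Analysis.Analysis"
begin

definition outer :: "real^'n \<Rightarrow> real^'n \<Rightarrow> real^'n^'n" where
  "outer u v = (\<chi> a b. u $ a * v $ b)"

definition mnorm :: "real^'n^'n \<Rightarrow> real^'n \<Rightarrow> real" where
  "mnorm M u = sqrt (u \<bullet> (M *v u))"

definition family_rank :: "('i \<Rightarrow> real^'n) \<Rightarrow> 'i set \<Rightarrow> nat" where
  "family_rank v I = dim (v ` I)"

end

theory Submission
  imports Defs
begin


definition G :: "real \<Rightarrow> ('i \<Rightarrow> real^'n) \<Rightarrow> 'i set \<Rightarrow> real^'n^'n" where
  "G lam z J = lam *\<^sub>R mat 1 + (\<Sum>j\<in>J. outer (z j) (z j))"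

lemma outer_mv: "outer u u *v v = (u \<bullet> v) *\<^sub>R u"
  by (simp add: vec_eq_iff outer_def matrix_vector_mult_def inner_vec_def sum_distrib_left mult.commute mult.left_commute)

lemma sum_mv: "finite J \<Longrightarrow> (\<Sum>j\<in>J. M j) *v v = (\<Sum>j\<in>J. M j *v v)"
  by (induction J rule: finite_induct) (auto simp: matrix_vector_mult_add_rdistrib)

lemma smat_mv: "(c *\<^sub>R M) *v (v::real^'n) = c *\<^sub>R (M *v v)"
  by (simp add: vec_eq_iff matrix_vector_mult_def sum_distrib_left mult.assoc)

lemma G_mv: "finite J \<Longrightarrow> G lam z J *v v = lam *\<^sub>R v + (\<Sum>j\<in>J. (z j \<bullet> v) *\<^sub>R z j)"
  by (simp add: G_def matrix_vector_mult_add_rdistrib sum_mv outer_mv smat_mv matrix_vector_mul_lid)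

lemma G_quad: "finite J \<Longrightarrow> w \<bullet> (G lam z J *v v) = lam * (w \<bullet> v) + (\<Sum>j\<in>J. (z j \<bullet> w) * (z j \<bullet> v))"
  by (simp add: G_mv inner_add_right inner_sum_right inner_commute mult.commute)

lemma G_pos: "finite J \<Longrightarrow> v \<bullet> (G lam z J *v v) = lam * (norm v)^2 + (\<Sum>j\<in>J. (z j \<bullet> v)^2)"
  proof -
  assume f: "finite J"
  have "v \<bullet> v = (norm v)^2" by (simp add: power2_norm_eq_inner)
  then show ?thesis by (simp add: G_quad[OF f] power2_eq_square)
qed

lemma G_inv:
  assumes "finite J" "lam > 0"
  shows "G lam z J ** matrix_inv (G lam z J) = mat 1 \<and> matrix_inv (G lam z J) ** G lam z J = mat 1"
proof -
  have "\<forall>v. G lam z J *v v = 0 \<longrightarrow> v = 0"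
  proof (intro allI impI)
    fix v assume "G lam z J *v v = 0"
    then have "v \<bullet> (G lam z J *v v) = 0" by simp
    then have "lam * (norm v)^2 + (\<Sum>j\<in>J. (z j \<bullet> v)^2) = 0" by (metis G_pos[OF assms(1)])
    moreover have "(\<Sum>j\<in>J. (z j \<bullet> v)^2) \<ge> 0" by (simp add: sum_nonneg)
    ultimately have "lam * (norm v)^2 \<le> 0" by linarith
    with assms(2) have "(norm v)^2 \<le> 0" by (simp add: mult_le_0_iff)
    then show "v = 0" by simp
  qed
  then have "invertible (G lam z J)"
    using matrix_left_invertible_ker invertible_left_inverse by blast
  then show ?thesis unfolding invertible_def matrix_inv_def by (rule someI_ex)
qed

lemma G_inv_mv:
  assumes "finite J" "lam > 0"
  shows "G lam z J *v (matrix_inv (G lam z J) *v v) = v"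
  using G_inv[OF assms] by (metis matrix_vector_mul_assoc matrix_vector_mul_lid)


lemma inv_quad:
  fixes z :: "'i \<Rightarrow> real^'n" and v :: "real^'n"
  assumes "finite J" "lam > 0"
  defines "c \<equiv> matrix_inv (G lam z J) *v v"
  shows "v \<bullet> (matrix_inv (G lam z J) *v v) = lam * (norm c)^2 + (\<Sum>j\<in>J. (z j \<bullet> c)^2)"
proof -
  have "v = G lam z J *v c" unfolding c_def by (metis G_inv_mv assms(1,2))
  then have "v \<bullet> c = c \<bullet> (G lam z J *v c)" by (metis inner_commute)
  then show ?thesis using G_pos[OF assms(1)] c_def by simp
qed

lemma inv_quad_ge:
  assumes "finite J" "lam > 0"
  shows "lam * (norm (matrix_inv (G lam z J) *v v))^2 \<le> v \<bullet> (matrix_inv (G lam z J) *v v)"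
    and "(\<Sum>j\<in>J. (z j \<bullet> (matrix_inv (G lam z J) *v v))^2) \<le> v \<bullet> (matrix_inv (G lam z J) *v v)"
    and "0 \<le> v \<bullet> (matrix_inv (G lam z J) *v v)"
proof -
  have s: "0 \<le> (\<Sum>j\<in>J. (z j \<bullet> (matrix_inv (G lam z J) *v v))^2)" by (simp add: sum_nonneg)
  have l: "0 \<le> lam * (norm (matrix_inv (G lam z J) *v v))^2" using assms(2) by simp
  show "lam * (norm (matrix_inv (G lam z J) *v v))^2 \<le> v \<bullet> (matrix_inv (G lam z J) *v v)"
    "(\<Sum>j\<in>J. (z j \<bullet> (matrix_inv (G lam z J) *v v))^2) \<le> v \<bullet> (matrix_inv (G lam z J) *v v)"
    "0 \<le> v \<bullet> (matrix_inv (G lam z J) *v v)"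
    using inv_quad[OF assms, of v z] s l by linarith+
qed

lemma inv_quad_le:
  assumes "finite J" "lam > 0"
  shows "v \<bullet> (matrix_inv (G lam z J) *v v) \<le> (norm v)^2 / lam"
proof -
  define c where "c = matrix_inv (G lam z J) *v v"
  define q where "q = v \<bullet> c"
  have q0: "0 \<le> q" using inv_quad_ge(3)[OF assms] q_def c_def by simp
  have qc: "lam * (norm c)^2 \<le> q" using inv_quad_ge(1)[OF assms] q_def c_def by simp
  have "q \<le> norm v * norm c" unfolding q_def by (metis Cauchy_Schwarz_ineq2 abs_le_D1)
  then have "q^2 \<le> (norm v)^2 * (norm c)^2" using q0
    by (metis power_mono power_mult_distrib)
  also have "\<dots> \<le> (norm v)^2 * (q / lam)" using qc assms(2)
    by (intro mult_left_mono) (auto simp: field_simps)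
  finally have "q^2 \<le> (norm v)^2 * (q / lam)" .
  moreover have "(norm v)^2 * (q / lam) = q * ((norm v)^2 / lam)" by simp
  ultimately have qq: "q * q \<le> q * ((norm v)^2 / lam)" by (simp add: power2_eq_square ac_simps)
  have "q \<le> (norm v)^2 / lam" if "q > 0" using qq that by (metis mult_le_cancel_left_pos)
  then show ?thesis using q0 assms(2) unfolding q_def c_def
    by (metis divide_nonneg_pos le_less zero_le_power2)
qed

lemma y_part:
  fixes x y :: "'i \<Rightarrow> real^'n" and v :: "real^'n"
  assumes "finite J" "lam > 0"
  defines "A \<equiv> G lam x J" and "B \<equiv> G lam y J"
  defines "D \<equiv> sqrt (\<Sum>j\<in>J. (norm (x j - y j))\<^sup>2)"
  shows "sqrt (v \<bullet> (matrix_inv A *v v)) \<le> (1 + 2 * D / sqrt lam) * sqrt (v \<bullet> (matrix_inv B *v v))"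
proof -
  define a where "a = matrix_inv A *v v"
  define b where "b = matrix_inv B *v v"
  define uA where "uA = v \<bullet> a"
  define wB where "wB = v \<bullet> b"
  have va: "A *v a = v" using G_inv_mv[OF assms(1,2)] A_def a_def by simp
  have vb: "B *v b = v" using G_inv_mv[OF assms(1,2)] B_def b_def by simp
  have "uA = a \<bullet> (B *v b)" unfolding uA_def using vb by (simp add: inner_commute)
  also have "\<dots> = lam * (a \<bullet> b) + (\<Sum>j\<in>J. (y j \<bullet> a) * (y j \<bullet> b))"
    unfolding B_def by (rule G_quad[OF assms(1)])
  finally have e1: "uA = lam * (a \<bullet> b) + (\<Sum>j\<in>J. (y j \<bullet> a) * (y j \<bullet> b))" .
  have "wB = b \<bullet> (A *v a)" unfolding wB_def using va by (simp add: inner_commute)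
  also have "\<dots> = lam * (b \<bullet> a) + (\<Sum>j\<in>J. (x j \<bullet> b) * (x j \<bullet> a))"
    unfolding A_def by (rule G_quad[OF assms(1)])
  finally have e2: "wB = lam * (a \<bullet> b) + (\<Sum>j\<in>J. (x j \<bullet> a) * (x j \<bullet> b))"
    by (simp add: inner_commute mult.commute)
  define T1 where "T1 = (\<Sum>j\<in>J. (y j \<bullet> b) * ((y j - x j) \<bullet> a))"
  define T2 where "T2 = (\<Sum>j\<in>J. ((y j - x j) \<bullet> b) * (x j \<bullet> a))"
  have diff: "uA = wB + T1 + T2"
    unfolding e1 e2 T1_def T2_def
    by (simp add: sum.distrib[symmetric] inner_diff_left algebra_simps)
  have uA0: "0 \<le> uA" and wB0: "0 \<le> wB"
    using inv_quad_ge(3)[OF assms(1,2)] uA_def a_def wB_def b_def A_def B_def by auto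
  have na: "lam * (norm a)^2 \<le> uA" using inv_quad_ge(1)[OF assms(1,2)] uA_def a_def A_def by auto
  have nb: "lam * (norm b)^2 \<le> wB" using inv_quad_ge(1)[OF assms(1,2)] wB_def b_def B_def by auto
  have sa: "(\<Sum>j\<in>J. (x j \<bullet> a)^2) \<le> uA" using inv_quad_ge(2)[OF assms(1,2)] uA_def a_def A_def by auto
  have sb: "(\<Sum>j\<in>J. (y j \<bullet> b)^2) \<le> wB" using inv_quad_ge(2)[OF assms(1,2)] wB_def b_def B_def by auto
  have D2: "D^2 = (\<Sum>j\<in>J. (norm (x j - y j))\<^sup>2)" unfolding D_def by (simp add: sum_nonneg)
  have cs: "(\<Sum>j\<in>J. ((y j - x j) \<bullet> w)^2) \<le> D^2 * (norm w)^2" for w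
  proof -
    have "(\<Sum>j\<in>J. ((y j - x j) \<bullet> w)^2) \<le> (\<Sum>j\<in>J. (norm (x j - y j))^2 * (norm w)^2)"
    proof (rule sum_mono)
      fix j
      have "\<bar>(y j - x j) \<bullet> w\<bar> \<le> norm (x j - y j) * norm w"
        by (metis Cauchy_Schwarz_ineq2 norm_minus_commute)
      then show "((y j - x j) \<bullet> w)^2 \<le> (norm (x j - y j))^2 * (norm w)^2"
        by (metis abs_ge_zero power2_abs power_mono power_mult_distrib)
    qed
    then show ?thesis by (simp add: D2 sum_distrib_right)
  qed
  have lt: "lam * (T1^2) \<le> D^2 * (uA * wB)"
  proof -
    have "T1^2 \<le> (\<Sum>j\<in>J. (y j \<bullet> b)^2) * (\<Sum>j\<in>J. ((y j - x j) \<bullet> a)^2)"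
      unfolding T1_def by (rule Cauchy_Schwarz_ineq_sum)
    also have "\<dots> \<le> wB * (D^2 * (norm a)^2)"
      using sb cs[of a] wB0 by (intro mult_mono) (auto simp: sum_nonneg)
    finally have "lam * T1^2 \<le> wB * D^2 * (lam * (norm a)^2)" using assms(2)
      by (simp add: algebra_simps)
    also have "\<dots> \<le> wB * D^2 * uA" using na wB0 by (intro mult_left_mono) auto
    finally show ?thesis by (simp add: algebra_simps)
  qed
  have lt2: "lam * (T2^2) \<le> D^2 * (uA * wB)"
  proof -
    have "T2^2 = (\<Sum>j\<in>J. (x j \<bullet> a) * ((y j - x j) \<bullet> b))^2"
      unfolding T2_def by (simp add: mult.commute)
    also have "\<dots> \<le> (\<Sum>j\<in>J. (x j \<bullet> a)^2) * (\<Sum>j\<in>J. ((y j - x j) \<bullet> b)^2)"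
      by (rule Cauchy_Schwarz_ineq_sum)
    also have "\<dots> \<le> uA * (D^2 * (norm b)^2)"
      using sa cs[of b] uA0 by (intro mult_mono) (auto simp: sum_nonneg)
    finally have "lam * T2^2 \<le> uA * D^2 * (lam * (norm b)^2)" using assms(2)
      by (simp add: algebra_simps)
    also have "\<dots> \<le> uA * D^2 * wB" using nb uA0 by (intro mult_left_mono) auto
    finally show ?thesis by (simp add: algebra_simps)
  qed
  define su where "su = sqrt uA"
  define sw where "sw = sqrt wB"
  define d where "d = D / sqrt lam"
  have su0: "0 \<le> su" and sw0: "0 \<le> sw" and d0: "0 \<le> d" unfolding su_def sw_def d_def D_def using uA0 wB0 assms(2) by (auto simp: sum_nonneg intro!: divide_nonneg_nonneg)
  have usq: "uA = su^2" and wsq: "wB = sw^2" using uA0 wB0 su_def sw_def by auto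
  have sl: "lam = (sqrt lam)^2" using assms(2) by simp
  have slp: "sqrt lam > 0" using assms(2) by simp
  have Dd: "D = d * sqrt lam" unfolding d_def using slp by simp
  have bT: "\<bar>T\<bar> \<le> d * su * sw" if "lam * T^2 \<le> D^2 * (uA * wB)" for T
  proof -
    have "(sqrt lam)^2 * T^2 \<le> (sqrt lam)^2 * (d * su * sw)^2"
      using that unfolding usq wsq Dd by (simp add: sl[symmetric] power_mult_distrib algebra_simps)
    then have "T^2 \<le> (d * su * sw)^2" using slp by simp
    then have "sqrt (T^2) \<le> sqrt ((d * su * sw)^2)" by (rule real_sqrt_le_mono)
    moreover have "0 \<le> d * su * sw" using su0 sw0 d0 by simp
    ultimately show ?thesis by simp
  qed
  have main: "su^2 \<le> sw^2 + 2 * d * su * sw"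
    using bT[OF lt] bT[OF lt2] diff usq wsq by (simp add: abs_le_iff)
  have "su \<le> (1 + 2 * d) * sw"
  proof (rule ccontr)
    assume "\<not> ?thesis"
    then have h: "su > (1 + 2*d) * sw" by simp
    have "0 \<le> 2 * d * sw" using d0 sw0 by simp
    then have "(1 + 2*d) * sw \<ge> sw" by (simp add: algebra_simps)
    then have "su \<ge> sw" "su > 0" using h sw0 by linarith+
    then have "su * sw \<ge> sw * sw" using sw0 by (simp add: mult_right_mono)
    moreover have "su * su > su * ((1 + 2*d) * sw)" using h su0 sw0 d0
      using \<open>su > 0\<close> by (intro mult_strict_left_mono) auto
    ultimately show False using main by (simp add: power2_eq_square algebra_simps)
  qed
  then show ?thesis unfolding su_def sw_def d_def uA_def wB_def a_def b_def by simp
qed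


lemma inv_sym:
  fixes z :: "'i \<Rightarrow> real^'n" and v w :: "real^'n"
  assumes "finite J" "lam > 0"
  shows "w \<bullet> (matrix_inv (G lam z J) *v v) = v \<bullet> (matrix_inv (G lam z J) *v w)"
proof -
  define c where "c = matrix_inv (G lam z J) *v v"
  define d where "d = matrix_inv (G lam z J) *v w"
  have gc: "G lam z J *v c = v" and gd: "G lam z J *v d = w"
    using G_inv_mv[OF assms] c_def d_def by auto
  have "w \<bullet> c = c \<bullet> (G lam z J *v d)" using gd by (simp add: inner_commute)
  also have "\<dots> = lam * (c \<bullet> d) + (\<Sum>j\<in>J. (z j \<bullet> c) * (z j \<bullet> d))" by (rule G_quad[OF assms(1)])
  also have "\<dots> = lam * (d \<bullet> c) + (\<Sum>j\<in>J. (z j \<bullet> d) * (z j \<bullet> c))"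
    by (simp add: inner_commute mult.commute)
  also have "\<dots> = d \<bullet> (G lam z J *v c)" by (rule G_quad[OF assms(1), symmetric])
  also have "\<dots> = v \<bullet> d" using gc by (simp add: inner_commute)
  finally show ?thesis using c_def d_def by simp
qed

lemma x_part:
  fixes z :: "'i \<Rightarrow> real^'n" and u v :: "real^'n"
  assumes "finite J" "lam > 0"
  shows "sqrt (u \<bullet> (matrix_inv (G lam z J) *v u))
    \<le> norm (u - v) / sqrt lam + sqrt (v \<bullet> (matrix_inv (G lam z J) *v v))"
proof -
  define M where "M = matrix_inv (G lam z J)"
  define e where "e = u - v"
  define a where "a = M *v v"
  define qy where "qy = v \<bullet> a"
  have u: "u = e + v" unfolding e_def by simp
  have qx: "u \<bullet> (M *v u) = e \<bullet> (M *v e) + 2 * (e \<bullet> a) + qy"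
  proof -
    have "v \<bullet> (M *v e) = e \<bullet> a" unfolding M_def a_def by (rule inv_sym[OF assms])
    then show ?thesis unfolding u qy_def a_def
      by (simp add: matrix_vector_right_distrib inner_add_left inner_add_right)
  qed
  have qy0: "0 \<le> qy" unfolding qy_def a_def M_def by (rule inv_quad_ge(3)[OF assms])
  have na: "lam * (norm a)^2 \<le> qy" unfolding qy_def a_def M_def by (rule inv_quad_ge(1)[OF assms])
  have qe: "e \<bullet> (M *v e) \<le> (norm e)^2 / lam" unfolding M_def by (rule inv_quad_le[OF assms])
  have sl: "sqrt lam > 0" using assms(2) by simp
  have "(sqrt lam * norm a)^2 \<le> (sqrt qy)^2" using na qy0 assms(2) by (simp add: power_mult_distrib)
  then have "sqrt lam * norm a \<le> sqrt qy" by (rule power2_le_imp_le) (use qy0 in auto)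
  then have anorm: "norm a \<le> sqrt qy / sqrt lam" using sl by (simp add: pos_le_divide_eq mult.commute)
  have "e \<bullet> a \<le> norm e * norm a" by (rule norm_cauchy_schwarz)
  also have "\<dots> \<le> norm e * (sqrt qy / sqrt lam)" using anorm by (intro mult_left_mono) auto
  finally have ea: "e \<bullet> a \<le> norm e * sqrt qy / sqrt lam" by simp
  have "u \<bullet> (M *v u) \<le> (norm e)^2 / lam + 2 * (norm e * sqrt qy / sqrt lam) + qy"
    using qx qe ea by linarith
  also have "\<dots> = (norm e / sqrt lam + sqrt qy)^2"
  proof -
    have h1: "(norm e / sqrt lam)^2 = (norm e)^2 / lam" using assms(2) by (simp add: power_divide)
    have h2: "(sqrt qy)^2 = qy" using qy0 by simp
    have h3: "2 * (norm e / sqrt lam) * sqrt qy = 2 * (norm e * sqrt qy / sqrt lam)" by simp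
    show ?thesis unfolding power2_sum h1 h2 h3 by simp
  qed
  finally have "sqrt (u \<bullet> (M *v u)) \<le> sqrt ((norm e / sqrt lam + sqrt qy)^2)" by (rule real_sqrt_le_mono)
  also have "\<dots> = norm e / sqrt lam + sqrt qy" using sl qy0 by simp
  finally show ?thesis unfolding M_def e_def qy_def a_def .
qed

theorem lemma13:
  fixes x y :: "'i \<Rightarrow> real^'n" and I J :: "'i set" and lam :: real and r :: nat
  assumes "J \<subseteq> I" and "finite J" and "lam > 0"
    and "family_rank x I = r" and "family_rank y I = r"
  shows "\<forall>i\<in>I.
    mnorm (matrix_inv (lam *\<^sub>R mat 1 + (\<Sum>j\<in>J. outer (x j) (x j)))) (x i)
    \<le> norm (x i - y i) / sqrt lam
       + (1 + 2 * sqrt (real r) * sqrt (\<Sum>j\<in>J. (norm (x j - y j))\<^sup>2) / sqrt lam)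
         * mnorm (matrix_inv (lam *\<^sub>R mat 1 + (\<Sum>j\<in>J. outer (y j) (y j)))) (y i)"
proof
  fix i assume iI: "i \<in> I"
  define D where "D = sqrt (\<Sum>j\<in>J. (norm (x j - y j))\<^sup>2)"
  define qy where "qy = sqrt (y i \<bullet> (matrix_inv (G lam y J) *v y i))"
  have qy0: "0 \<le> qy" unfolding qy_def using inv_quad_ge(3)[OF assms(2,3)] by simp
  have D0: "0 \<le> D" unfolding D_def by (simp add: sum_nonneg)
  have sl: "sqrt lam > 0" using assms(3) by simp
  have goal: "sqrt (x i \<bullet> (matrix_inv (G lam x J) *v x i))
     \<le> norm (x i - y i) / sqrt lam + (1 + 2 * sqrt (real r) * D / sqrt lam) * qy"
  proof (cases "r = 0")
    case True
    then have "x ` I \<subseteq> {0}" using assms(4) unfolding family_rank_def by simp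
    moreover have "y ` I \<subseteq> {0}" using assms(5) True unfolding family_rank_def by simp
    ultimately have "x i = 0" "y i = 0" using iI by auto
    moreover have "0 \<le> (1 + 2 * sqrt (real r) * D / sqrt lam) * qy"
      using qy0 D0 sl by simp
    ultimately show ?thesis by simp
  next
    case False
    then have r1: "1 \<le> sqrt (real r)" by simp
    have "2 * D / sqrt lam \<le> 2 * sqrt (real r) * D / sqrt lam"
      using r1 D0 sl by (intro divide_right_mono) (auto simp: mult_right_mono)
    then have "(1 + 2 * D / sqrt lam) * qy \<le> (1 + 2 * sqrt (real r) * D / sqrt lam) * qy"
      using qy0 by (intro mult_right_mono) auto
    moreover have "sqrt (y i \<bullet> (matrix_inv (G lam x J) *v y i)) \<le> (1 + 2 * D / sqrt lam) * qy"
      unfolding qy_def D_def by (rule y_part[OF assms(2,3)])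
    moreover have "sqrt (x i \<bullet> (matrix_inv (G lam x J) *v x i))
        \<le> norm (x i - y i) / sqrt lam + sqrt (y i \<bullet> (matrix_inv (G lam x J) *v y i))"
      by (rule x_part[OF assms(2,3)])
    ultimately show ?thesis by linarith
  qed
  then show "mnorm (matrix_inv (lam *\<^sub>R mat 1 + (\<Sum>j\<in>J. outer (x j) (x j)))) (x i)
    \<le> norm (x i - y i) / sqrt lam
       + (1 + 2 * sqrt (real r) * sqrt (\<Sum>j\<in>J. (norm (x j - y j))\<^sup>2) / sqrt lam)
         * mnorm (matrix_inv (lam *\<^sub>R mat 1 + (\<Sum>j\<in>J. outer (y j) (y j)))) (y i)"
    unfolding mnorm_def D_def qy_def G_def .
qed

end
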